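(* Let $p \ge 2$ and $K \ge 0$ be coprime integers, and let $L, R$ be integers with $0 \le L \le R < p$. Define $G(p,K,L,R)$ recursively by taking the first of the following cases (checked in the order listed) whose condition holds: (a) if $K = 0$ or $L = 0$: $G(p,K,L,R) = 0$; (b) if $K \ge p$: $G(p,K,L,R) = G(p, K \bmod p, L, R)$; (c) if $\lceil L/K \rceil \le \lfloor R/K \rfloor$: $G(p,K,L,R) = \lceil L/K \rceil$; (d) if $2K \ge p$: $G(p,K,L,R) = G(p, p-K, p-R, p-L)$; (e) otherwise: $G(p,K,L,R) = \left\lceil \dfrac{L + p \cdot G\big(K,\ (-p) \bmod K,\ L \bmod K,\ R \bmod K\big)}{K} \right\rceil$. Then the recursion terminates after $O(\log p)$ recursive calls, and $G(p,K,L,R)$ is the smallest nonnegative integer $m$ such that $L \le (mK \bmod p) \le R$.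
   Context: For integers $a$ and $n \ge 1$, $a \bmod n$ denotes the unique representative of $a$ modulo $n$ in $\{0,1,\dots,n-1\}$. The condition "$L \le mK \le R \bmod p$" means that the least nonnegative residue of $mK$ modulo $p$ lies in the interval $[L,R]$. Since $\gcd(p,K)=1$, such an $m$ exists (e.g. $m \equiv L K^{-1} \pmod p$). *)

theory Defs
  imports Complex_Main
begin

(* Fuel-indexed rendering of the recursion G(p,K,L,R).
   Gf n p K L R = None  if the recursion does not finish within fuel n;
   otherwise Some (value, number of recursive calls made). *)
fun Gf :: "nat \<Rightarrow> int \<Rightarrow> int \<Rightarrow> int \<Rightarrow> int \<Rightarrow> (int \<times> nat) option" where
  "Gf 0 p K L R = None"
| "Gf (Suc n) p K L R =
     (if K = 0 \<or> L = 0 then Some (0, 0)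
      else if K \<ge> p then
        map_option (\<lambda>(g, c). (g, Suc c)) (Gf n p (K mod p) L R)
      else if \<lceil>real_of_int L / real_of_int K\<rceil> \<le> \<lfloor>real_of_int R / real_of_int K\<rfloor> then
        Some (\<lceil>real_of_int L / real_of_int K\<rceil>, 0)
      else if 2 * K \<ge> p then
        map_option (\<lambda>(g, c). (g, Suc c)) (Gf n p (p - K) (p - R) (p - L))
      else
        map_option (\<lambda>(g, c). (\<lceil>real_of_int (L + p * g) / real_of_int K\<rceil>, Suc c))
          (Gf n K ((- p) mod K) (L mod K) (R mod K)))"

end

theory Submission
  imports Defs
begin

definition good :: "int \<Rightarrow> int \<Rightarrow> int \<Rightarrow> int \<Rightarrow> int \<Rightarrow> bool" where
"good p K L R g \<longleftrightarrow> 0 \<le> g \<and> L \<le> (g*K) mod p \<and> (g*K) mod p \<le> R \<and>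
   (\<forall>m. 0 \<le> m \<and> m < g \<longrightarrow> \<not> (L \<le> (m*K) mod p \<and> (m*K) mod p \<le> R))"

lemma case_c:
  fixes p K L R :: int
  assumes K: "K > 0" and L: "0 \<le> L" and R: "R < p"
    and c: "\<lceil>real_of_int L / real_of_int K\<rceil> \<le> \<lfloor>real_of_int R / real_of_int K\<rfloor>"
  shows "good p K L R \<lceil>real_of_int L / real_of_int K\<rceil>"
proof -
  define g where "g = \<lceil>real_of_int L / real_of_int K\<rceil>"
  have Kr: "real_of_int K > 0" using K by simp
  have "real_of_int L / real_of_int K \<le> real_of_int g" unfolding g_def by simp
  then have "real_of_int L \<le> real_of_int g * real_of_int K" using Kr by (simp add: field_simps)
  then have gL: "L \<le> g * K" by (simp flip: of_int_mult)
  have "real_of_int g \<le> real_of_int R / real_of_int K" using c unfolding g_def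
    by (meson le_floor_iff order_trans of_int_floor_le of_int_le_iff)
  then have "real_of_int g * real_of_int K \<le> real_of_int R" using Kr by (simp add: field_simps)
  then have gR: "g * K \<le> R" by (simp flip: of_int_mult)
  have g0: "0 \<le> g"
  proof (rule ccontr)
    assume "\<not> 0 \<le> g"
    then have "g*K < 0" using K by (simp add: mult_neg_pos)
    then show False using gL L by simp
  qed
  have gm: "(g*K) mod p = g*K" using gL gR L R by simp
  have "\<not> (L \<le> (m*K) mod p \<and> (m*K) mod p \<le> R)" if m: "0 \<le> m" "m < g" for m
  proof -
    have "real_of_int m < real_of_int L / real_of_int K"
      using m(2) unfolding g_def by (simp add: less_ceiling_iff)
    then have "real_of_int m * real_of_int K < real_of_int L" using Kr by (simp add: field_simps)
    then have "m * K < L" by (simp flip: of_int_mult)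
    moreover have "0 \<le> m * K" using m K by simp
    ultimately have "(m*K) mod p = m*K" using gL gR R by simp
    with \<open>m*K < L\<close> show ?thesis by simp
  qed
  then show ?thesis unfolding good_def g_def[symmetric] using g0 gm gL gR by simp
qed

lemma neg_mod_rel:
  fixes p K m :: int
  shows "(m*(p-K)) mod p = (if (m*K) mod p = 0 then 0 else p - (m*K) mod p)"
proof -
  have "(m*(p-K)) mod p = (-(m*K)) mod p"
    by (metis (no_types, opaque_lifting) add.commute diff_conv_add_uminus mod_mult_self2 mult.commute right_diff_distrib')
  then show ?thesis by (simp add: zmod_zminus1_eq_if)
qed

lemma case_d:
  fixes p K L R g :: int
  assumes L: "1 \<le> L" and LR: "L \<le> R" and R: "R < p"
    and G: "good p (p-K) (p-R) (p-L) g"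
  shows "good p K L R g"
proof -
  have pp: "p > 0" using L LR R by simp
  from G have g0: "0 \<le> g" and a: "p - R \<le> (g*(p-K)) mod p" and b: "(g*(p-K)) mod p \<le> p - L"
    and mn: "\<And>m. 0 \<le> m \<Longrightarrow> m < g \<Longrightarrow> \<not> (p-R \<le> (m*(p-K)) mod p \<and> (m*(p-K)) mod p \<le> p-L)"
    unfolding good_def by auto
  have "(g*K) mod p \<noteq> 0" using a R neg_mod_rel[of g p K] by auto
  then have e: "(g*(p-K)) mod p = p - (g*K) mod p" using neg_mod_rel[of g p K] by simp
  have "\<not> (L \<le> (m*K) mod p \<and> (m*K) mod p \<le> R)" if "0 \<le> m" "m < g" for m
  proof
    assume h: "L \<le> (m*K) mod p \<and> (m*K) mod p \<le> R"
    then have "(m*K) mod p \<noteq> 0" using L by auto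
    then have "(m*(p-K)) mod p = p - (m*K) mod p" using neg_mod_rel[of m p K] by simp
    then show False using mn[OF that] h by auto
  qed
  then show ?thesis unfolding good_def using g0 a b e by auto
qed

lemma nomult:
  fixes K L R j :: int
  assumes K: "K > 0"
    and c: "\<not> \<lceil>real_of_int L / real_of_int K\<rceil> \<le> \<lfloor>real_of_int R / real_of_int K\<rfloor>"
  shows "\<not> (L \<le> j*K \<and> j*K \<le> R)"
proof
  assume h: "L \<le> j*K \<and> j*K \<le> R"
  have Kr: "real_of_int K > 0" using K by simp
  have "real_of_int L \<le> real_of_int j * real_of_int K" using h by (simp flip: of_int_mult)
  then have "real_of_int L / real_of_int K \<le> real_of_int j" using Kr by (simp add: field_simps)
  then have 1: "\<lceil>real_of_int L / real_of_int K\<rceil> \<le> j" by (simp add: ceiling_le_iff)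
  have "real_of_int j * real_of_int K \<le> real_of_int R" using h by (simp flip: of_int_mult)
  then have "real_of_int j \<le> real_of_int R / real_of_int K" using Kr by (simp add: field_simps)
  then have 2: "j \<le> \<lfloor>real_of_int R / real_of_int K\<rfloor>" by (simp add: le_floor_iff)
  show False using 1 2 c by simp
qed

lemma case_e:
  fixes p K L R q :: int
  assumes K: "K > 0" and p: "p > 0" and L: "0 \<le> L" and LR: "L \<le> R" and R: "R < p"
    and nm: "\<And>j. \<not> (L \<le> j*K \<and> j*K \<le> R)"
    and G: "good K ((-p) mod K) (L mod K) (R mod K) q"
  shows "good p K L R \<lceil>real_of_int (L + p*q) / real_of_int K\<rceil>"
proof -
  define d where "d = L div K"
  have RdK: "(R div K) * K < L"
  proof -
    have "(R div K) * K \<le> R" using K by (smt (verit) div_mult_mod_eq pos_mod_sign)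
    then show ?thesis using nm[of "R div K"] by linarith
  qed
  have "R div K \<le> L div K"
  proof -
    have "(R div K) * K \<le> L" using RdK by simp
    then have "(R div K * K) div K \<le> L div K" using K by (metis zdiv_mono1)
    then show ?thesis using K by simp
  qed
  moreover have "L div K \<le> R div K" using LR K by (simp add: zdiv_mono1)
  ultimately have dR: "R div K = d" unfolding d_def by simp
  define l where "l = L mod K"
  define r where "r = R mod K"
  have Ld: "L = d*K + l" unfolding d_def l_def by (metis mult.commute div_mult_mod_eq)
  have Rd: "R = d*K + r" unfolding r_def using dR by (metis mult.commute div_mult_mod_eq)
  have l0: "0 \<le> l" and rK: "r < K" unfolding l_def r_def using K by auto
  from G have q0: "0 \<le> q" and sa: "l \<le> (q*((-p) mod K)) mod K" and sb: "(q*((-p) mod K)) mod K \<le> r"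
    and qmin: "\<And>m. 0 \<le> m \<Longrightarrow> m < q \<Longrightarrow> \<not> (l \<le> (m*((-p) mod K)) mod K \<and> (m*((-p) mod K)) mod K \<le> r)"
    unfolding good_def l_def r_def by auto
  have negm: "(x*((-p) mod K)) mod K = (-(x*p)) mod K" for x
    by (metis mod_mult_right_eq mult_minus_right)
  define s where "s = (-(q*p)) mod K"
  have sl: "l \<le> s" and sr: "s \<le> r" using sa sb negm[of q] unfolding s_def by auto
  define t where "t = d*K + s"
  have tL: "L \<le> t" and tR: "t \<le> R" unfolding t_def using Ld Rd sl sr by auto
  have "K dvd (s + q*p)" unfolding s_def
    by (metis add.commute mod_add_right_eq mod_0 dvd_eq_mod_eq_0 add.right_inverse mod_add_left_eq minus_mult_left)
  then have "K dvd (t + q*p)" unfolding t_def by (metis add.assoc dvd_add dvd_triv_right)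
  then obtain g where gdef: "t + q*p = K*g" by (metis dvdE)
  have tlt: "t < L + K" unfolding t_def using Ld sr rK l0 by linarith
  have gceil: "\<lceil>real_of_int (L + p*q) / real_of_int K\<rceil> = g"
  proof (rule ceiling_unique)
    have Kr: "real_of_int K > 0" using K by simp
    have "L + p*q \<le> K*g" using gdef tL by (simp add: mult.commute)
    then have "real_of_int (L + p*q) \<le> real_of_int K * real_of_int g" by (simp flip: of_int_mult)
    then show "real_of_int (L + p*q) / real_of_int K \<le> real_of_int g" using Kr by (simp add: field_simps)
    have "K*g < L + p*q + K" using gdef tlt by (simp add: mult.commute)
    then have "real_of_int K * real_of_int g < real_of_int (L + p*q) + real_of_int K" by (simp flip: of_int_mult)
    then show "real_of_int g - 1 < real_of_int (L + p*q) / real_of_int K" using Kr by (simp add: field_simps)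
  qed
  have t0: "0 \<le> t" "t < p" using tL tR L R by auto
  have gm: "(g*K) mod p = t"
  proof -
    have "g*K = t + q*p" using gdef by (simp add: mult.commute)
    then show ?thesis using t0 by simp
  qed
  have g0: "0 \<le> g"
  proof (rule ccontr)
    assume "\<not> 0 \<le> g"
    then have "K*g < 0" using K by (simp add: mult_pos_neg)
    then show False using gdef t0 q0 p by (smt (verit) mult_nonneg_nonneg)
  qed
  have "\<not> (L \<le> (m*K) mod p \<and> (m*K) mod p \<le> R)" if m: "0 \<le> m" "m < g" for m
  proof
    assume h: "L \<le> (m*K) mod p \<and> (m*K) mod p \<le> R"
    define t' where "t' = (m*K) mod p"
    define q' where "q' = (m*K) div p"
    have mq: "m*K = q'*p + t'" unfolding t'_def q'_def by (metis div_mult_mod_eq)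
    have q'0: "0 \<le> q'" unfolding q'_def using m K p by (simp add: pos_imp_zdiv_nonneg_iff)
    have "(-(q'*p)) mod K = t' mod K"
    proof -
      have "-(q'*p) = t' + (-m)*K" using mq by simp
      then show ?thesis by (metis mod_mult_self1)
    qed
    also have "t' mod K = t' - d*K"
    proof -
      have "t' = (t' - d*K) + d*K" by simp
      moreover have "0 \<le> t' - d*K" "t' - d*K < K" using h Ld Rd l0 rK unfolding t'_def by auto
      ultimately show ?thesis by (metis mod_mult_self1 mod_pos_pos_trivial)
    qed
    finally have e: "(q'*((-p) mod K)) mod K = t' - d*K" using negm[of q'] by simp
    have "\<not> q' < q"
    proof
      assume "q' < q"
      from qmin[OF q'0 this] e h Ld Rd show False unfolding t'_def by auto
    qed
    then have "q*p \<le> q'*p" using p by simp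
    then have "K*g < K*(m+1)" using gdef mq tlt h unfolding t'_def by (simp add: algebra_simps)
    then have "g < m+1" using K by simp
    then show False using m by simp
  qed
  then show ?thesis unfolding good_def gceil using g0 gm tL tR by auto
qed

lemma main_ind:
  "\<forall>p K L R. 2 \<le> p \<and> p \<le> 2^k \<and> 0 \<le> K \<and> K < p \<and> coprime p K \<and> 0 \<le> L \<and> L \<le> R \<and> R < p \<longrightarrow>
     (\<exists>n g c. Gf n p K L R = Some (g, c) \<and> good p K L R g \<and> c \<le> 2*k \<and> (2*K < p \<longrightarrow> c + 1 \<le> 2*k))"
proof (induction k)
  case 0
  then show ?case by simp
next
  case (Suc k)
  show ?case
  proof (intro allI impI)
    fix p K L R :: int
    assume A: "2 \<le> p \<and> p \<le> 2^Suc k \<and> 0 \<le> K \<and> K < p \<and> coprime p K \<and> 0 \<le> L \<and> L \<le> R \<and> R < p"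
    have p2: "2 \<le> p" and pk: "p \<le> 2^Suc k" using A by auto
    have K0: "K \<noteq> 0" if "coprime p K" for K
      using that p2 by auto
    have half: "\<exists>n g c. Gf n p K L R = Some (g, c) \<and> good p K L R g \<and> c + 1 \<le> 2*Suc k"
      if B: "0 \<le> K" "K < p" "coprime p K" "0 \<le> L" "L \<le> R" "R < p" "2*K < p" for K L R
    proof -
      have Kp: "K > 0" using K0[OF B(3)] B(1) by simp
      show ?thesis
      proof (cases "L = 0")
        case True
        have "Gf (Suc 0) p K L R = Some (0, 0)" using True by simp
        moreover have "good p K L R 0" unfolding good_def using True B by simp
        ultimately show ?thesis by fastforce
      next
        case L0: False
        show ?thesis
        proof (cases "\<lceil>real_of_int L / real_of_int K\<rceil> \<le> \<lfloor>real_of_int R / real_of_int K\<rfloor>")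
          case True
          have "Gf (Suc 0) p K L R = Some (\<lceil>real_of_int L / real_of_int K\<rceil>, 0)" using True L0 Kp B by simp
          moreover have "good p K L R \<lceil>real_of_int L / real_of_int K\<rceil>" using case_c[OF Kp B(4) B(6) True] .
          ultimately show ?thesis by fastforce
        next
          case nc: False
          have nm: "\<And>j. \<not> (L \<le> j*K \<and> j*K \<le> R)" using nomult[OF Kp nc] by blast
          have K2: "K \<ge> 2"
          proof (rule ccontr)
            assume "\<not> K \<ge> 2"
            then have "K = 1" using Kp by simp
            then show False using nm[of L] B by simp
          qed
          have cop: "coprime K ((-p) mod K)"
            using B(3) by (metis coprime_commute coprime_minus_right_iff coprime_mod_right_iff Kp less_irrefl)
          have "L mod K \<le> R mod K"
          proof -
            have "(R div K) * K \<le> R" using Kp by (smt (verit) div_mult_mod_eq pos_mod_sign)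
            then have "(R div K) * K < L" using nm[of "R div K"] by linarith
            then have "(R div K * K) div K \<le> L div K" using Kp by (metis zdiv_mono1 less_imp_le)
            then have "R div K \<le> L div K" using Kp by simp
            moreover have "L div K \<le> R div K" using B Kp by (simp add: zdiv_mono1)
            ultimately have "L div K = R div K" by simp
            then show ?thesis using B(5) by (metis add_le_cancel_left div_mult_mod_eq)
          qed
          moreover have "K \<le> 2^k" using pk B(7) by simp
          moreover have "0 \<le> (-p) mod K" "(-p) mod K < K" "0 \<le> L mod K" "R mod K < K" using Kp by auto
          ultimately have "\<exists>n g c. Gf n K ((-p) mod K) (L mod K) (R mod K) = Some (g, c) \<and>
            good K ((-p) mod K) (L mod K) (R mod K) g \<and> c \<le> 2*k"
            using Suc.IH[rule_format, of K "(-p) mod K" "L mod K" "R mod K"] K2 cop by blast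
          then obtain n g c where r: "Gf n K ((-p) mod K) (L mod K) (R mod K) = Some (g, c)"
            and gg: "good K ((-p) mod K) (L mod K) (R mod K) g" and ck: "c \<le> 2*k" by blast
          have "Gf (Suc n) p K L R = Some (\<lceil>real_of_int (L + p*g) / real_of_int K\<rceil>, Suc c)"
            using r L0 Kp B nc by simp
          moreover have "good p K L R \<lceil>real_of_int (L + p*g) / real_of_int K\<rceil>"
            using case_e[OF Kp _ B(4) B(5) B(6) nm gg] p2 by simp
          ultimately show ?thesis using ck by fastforce
        qed
      qed
    qed
    show "\<exists>n g c. Gf n p K L R = Some (g, c) \<and> good p K L R g \<and> c \<le> 2*Suc k \<and> (2*K < p \<longrightarrow> c + 1 \<le> 2*Suc k)"
    proof (cases "2*K < p")
      case True
      then show ?thesis using half A by fastforce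
    next
      case big: False
      have Kp: "K > 0" using K0 A by force
      show ?thesis
      proof (cases "L = 0")
        case True
        have "Gf (Suc 0) p K L R = Some (0, 0)" using True by simp
        moreover have "good p K L R 0" unfolding good_def using True A by simp
        ultimately show ?thesis by fastforce
      next
        case L0: False
        show ?thesis
        proof (cases "\<lceil>real_of_int L / real_of_int K\<rceil> \<le> \<lfloor>real_of_int R / real_of_int K\<rfloor>")
          case True
          have "Gf (Suc 0) p K L R = Some (\<lceil>real_of_int L / real_of_int K\<rceil>, 0)" using True L0 Kp A by simp
          moreover have "good p K L R \<lceil>real_of_int L / real_of_int K\<rceil>" using case_c[OF Kp _ _ True] A by simp
          ultimately show ?thesis by fastforce
        next
          case nc: False
          have nm: "\<And>j. \<not> (L \<le> j*K \<and> j*K \<le> R)" using nomult[OF Kp nc] by blast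
          have K2: "K \<ge> 2"
          proof (rule ccontr)
            assume "\<not> K \<ge> 2"
            then have "K = 1" using Kp by simp
            then show False using nm[of L] A by simp
          qed
          have "2*(p-K) < p"
          proof (rule ccontr)
            assume "\<not> 2*(p-K) < p"
            then have "p = 2*K" using big by simp
            then have "K dvd p" by simp
            then have "K dvd 1" using A by (meson coprime_common_divisor dvd_refl)
            then show False using K2 by simp
          qed
          moreover have "coprime p (p-K)"
          proof -
            have "(p-K) mod p = (-K) mod p" by (metis add.commute diff_conv_add_uminus mod_add_self2)
            then have "coprime p ((p-K) mod p) = coprime p ((-K) mod p)" by simp
            then show ?thesis using A coprime_mod_right_iff[of p "p-K"] coprime_mod_right_iff[of p "-K"] by auto
          qed
          ultimately obtain n g c where r: "Gf n p (p-K) (p-R) (p-L) = Some (g, c)"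
            and gg: "good p (p-K) (p-R) (p-L) g" and ck: "c + 1 \<le> 2*Suc k"
            using half[of "p-K" "p-R" "p-L"] A Kp L0 by auto
          have "Gf (Suc n) p K L R = Some (g, Suc c)"
            using r L0 Kp A nc big by simp
          moreover have "good p K L R g" using case_d[OF _ _ _ gg] A L0 by simp
          ultimately show ?thesis using ck big by fastforce
        qed
      qed
    qed
  qed
qed

lemma good_mod: "p \<noteq> 0 \<Longrightarrow> good p (K mod p) L R g = good p K L R g"
  unfolding good_def by (simp add: mod_mult_right_eq)

lemma bound_real:
  fixes p :: int and j c :: nat
  assumes "2 ^ j < p" "2 \<le> p" "c \<le> 2*j + 3"
  shows "real c \<le> 5 / ln 2 * ln (real_of_int p)"
proof -
  have l2: "ln (2::real) > 0" by simp
  have "real_of_int (2^j) < real_of_int p" using assms(1) by (simp only: of_int_less_iff)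
  then have "(2::real)^j < real_of_int p" by simp
  then have "ln ((2::real)^j) < ln (real_of_int p)" using assms(2) by (subst ln_less_cancel_iff) auto
  then have a: "real j * ln 2 < ln (real_of_int p)" by (simp add: ln_realpow)
  have "ln 2 \<le> ln (real_of_int p)" using assms(2) by simp
  then have "real (2*j+3) * ln 2 \<le> 5 * ln (real_of_int p)" using a by (simp add: algebra_simps)
  then have "real c * ln 2 \<le> 5 * ln (real_of_int p)" using assms(3) l2
    by (smt (verit, best) mult_right_mono of_nat_le_iff)
  then show ?thesis using l2 by (simp add: field_simps)
qed

theorem mainTheorem1:
  "\<exists>C::real. \<forall>p K L R :: int.
     p \<ge> 2 \<and> K \<ge> 0 \<and> coprime p K \<and> 0 \<le> L \<and> L \<le> R \<and> R < p \<longrightarrow>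
     (\<exists>n g c. Gf n p K L R = Some (g, c)
        \<and> real c \<le> C * ln (real_of_int p)
        \<and> 0 \<le> g \<and> L \<le> (g * K) mod p \<and> (g * K) mod p \<le> R
        \<and> (\<forall>m. 0 \<le> m \<and> m < g \<longrightarrow> \<not> (L \<le> (m * K) mod p \<and> (m * K) mod p \<le> R)))"
proof (rule exI[of _ "5 / ln 2"], intro allI impI)
  fix p K L R :: int
  assume A: "p \<ge> 2 \<and> K \<ge> 0 \<and> coprime p K \<and> 0 \<le> L \<and> L \<le> R \<and> R < p"
  have p2: "2 \<le> p" using A by simp
  have "\<exists>n. 2^n \<le> nat p - 1 \<and> nat p - 1 < (2::nat)^(n+1)"
    by (rule ex_power_ivl1) (use p2 in auto)
  then obtain j where j1: "2^j \<le> nat p - 1" and j2: "nat p - 1 < (2::nat)^(j+1)" by blast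
  have n1: "(2::nat)^j < nat p" using j1 p2 by linarith
  have n2: "nat p \<le> (2::nat)^(j+1)" using j2 by linarith
  have pj: "p \<le> 2^(j+1)"
  proof -
    have "int (nat p) \<le> int ((2::nat)^(j+1))" using n2 by (simp only: of_nat_le_iff)
    then show ?thesis using p2 by simp
  qed
  have jp: "2^j < p"
  proof -
    have "int ((2::nat)^j) < int (nat p)" using n1 by (simp only: of_nat_less_iff)
    then show ?thesis using p2 by simp
  qed
  have K0: "K \<noteq> 0" using A p2 by auto
  have "\<exists>n g c. Gf n p K L R = Some (g, c) \<and> good p K L R g \<and> c \<le> 2*j + 3"
  proof (cases "L = 0")
    case True
    have "Gf (Suc 0) p K L R = Some (0, 0)" using True by simp
    moreover have "good p K L R 0" unfolding good_def using True A by simp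
    ultimately show ?thesis by fastforce
  next
    case L0: False
    show ?thesis
    proof (cases "K < p")
      case True
      then show ?thesis using main_ind[of "j+1"] A pj by fastforce
    next
      case False
      have "coprime p (K mod p)" using A p2 by simp
      moreover have "0 \<le> K mod p" "K mod p < p" using p2 by auto
      ultimately obtain n g c where r: "Gf n p (K mod p) L R = Some (g, c)"
        and gg: "good p (K mod p) L R g" and ck: "c \<le> 2*(j+1)"
        using main_ind[of "j+1"] A pj by blast
      have "Gf (Suc n) p K L R = Some (g, Suc c)" using r L0 K0 False by simp
      moreover have "good p K L R g" using gg good_mod[of p K L R g] p2 by simp
      ultimately show ?thesis using ck by fastforce
    qed
  qed
  then obtain n g c where "Gf n p K L R = Some (g, c)" "good p K L R g" "c \<le> 2*j + 3" by blast
  then show "\<exists>n g c. Gf n p K L R = Some (g, c)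
        \<and> real c \<le> 5 / ln 2 * ln (real_of_int p)
        \<and> 0 \<le> g \<and> L \<le> (g * K) mod p \<and> (g * K) mod p \<le> R
        \<and> (\<forall>m. 0 \<le> m \<and> m < g \<longrightarrow> \<not> (L \<le> (m * K) mod p \<and> (m * K) mod p \<le> R))"
    using bound_real[OF jp p2] unfolding good_def by blast
qed

end
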